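(* Let $(E,P,\vartheta)$ be a bipolar metric space and let $F\colon E\cup P\to E\cup P$ satisfy $F(E)\subseteq E$, $F(P)\subseteq P$. Assume there exist $\pi\in(0,1)$, an integer $\sigma\geq1$ and constants $q_1,\dots,q_\sigma,H_1,\dots,H_\sigma\in(0,\infty)$ such that $$\sum_{\upsilon=1}^{\sigma}q_\upsilon\,\vartheta^\upsilon(Fe,Ff)\leq\pi\sum_{\upsilon=1}^{\sigma}q_\upsilon\big[\vartheta^\upsilon(e,f)+H_\upsilon\,\vartheta^\upsilon(Fe,f)\big]\quad\text{for all } e\in E,\ f\in P.$$ Then $F$ is Picard-continuous.
   Context: A bipolar metric space is a triple $(E,P,\vartheta)$ where $E,P$ are nonempty sets and $\vartheta\colon E\times P\to[0,\infty)$ satisfies: (1) for $e\in E$, $f\in P$, $\vartheta(e,f)=0$ iff $e=f$; (2) $\vartheta(e,f)=\vartheta(f,e)$ whenever $e,f\in E\cap P$; (3) $\vartheta(e,f)\leq\vartheta(e,z)+\vartheta(r,z)+\vartheta(r,f)$ for all $e,r\in E$, $z,f\in P$. $F$ is Picard-continuous if for all $g\in E$, $h\in P$: $\lim_{n\to\infty}\vartheta(F^ng,h)=0$ implies $\lim_{n\to\infty}\vartheta(F(F^ng),Fh)=0$, where $F^0g=g$, $F^{n+1}g=F(F^ng)$. $\vartheta^\upsilon$ denotes the $\upsilon$-th power of $\vartheta$. *)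

theory Defs
  imports "HOL-Analysis.Analysis"
begin

text \<open>Bipolar metric space (E, P, d): E, P nonempty subsets of an ambient type,
  d only meaningful on E \<times> P.\<close>
definition bipolar_metric_space :: "'a set \<Rightarrow> 'a set \<Rightarrow> ('a \<Rightarrow> 'a \<Rightarrow> real) \<Rightarrow> bool" where
  "bipolar_metric_space E P d \<longleftrightarrow>
     E \<noteq> {} \<and> P \<noteq> {} \<and>
     (\<forall>e\<in>E. \<forall>f\<in>P. d e f \<ge> 0) \<and>
     (\<forall>e\<in>E. \<forall>f\<in>P. d e f = 0 \<longleftrightarrow> e = f) \<and>
     (\<forall>e\<in>E \<inter> P. \<forall>f\<in>E \<inter> P. d e f = d f e) \<and>
     (\<forall>e\<in>E. \<forall>r\<in>E. \<forall>z\<in>P. \<forall>f\<in>P. d e f \<le> d e z + d r z + d r f)"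

definition picard_continuous :: "'a set \<Rightarrow> 'a set \<Rightarrow> ('a \<Rightarrow> 'a \<Rightarrow> real) \<Rightarrow> ('a \<Rightarrow> 'a) \<Rightarrow> bool" where
  "picard_continuous E P d F \<longleftrightarrow>
     (\<forall>g\<in>E. \<forall>h\<in>P. (\<lambda>n. d ((F ^^ n) g) h) \<longlonglongrightarrow> 0 \<longrightarrow>
        (\<lambda>n. d (F ((F ^^ n) g)) (F h)) \<longlonglongrightarrow> 0)"

end

theory Submission
  imports Defs
begin

theorem proposition4p4:
  fixes E P :: "'a set" and d :: "'a \<Rightarrow> 'a \<Rightarrow> real" and F :: "'a \<Rightarrow> 'a"
    and pi :: real and \<sigma> :: nat and q H :: "nat \<Rightarrow> real"
  assumes "bipolar_metric_space E P d"
    and "F ` E \<subseteq> E" and "F ` P \<subseteq> P"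
    and "0 < pi" and "pi < 1"
    and "\<sigma> \<ge> 1"
    and "\<And>u. u \<in> {1..\<sigma>} \<Longrightarrow> q u > 0"
    and "\<And>u. u \<in> {1..\<sigma>} \<Longrightarrow> H u > 0"
    and "\<And>e f. e \<in> E \<Longrightarrow> f \<in> P \<Longrightarrow>
           (\<Sum>u=1..\<sigma>. q u * d (F e) (F f) ^ u)
             \<le> pi * (\<Sum>u=1..\<sigma>. q u * (d e f ^ u + H u * d (F e) f ^ u))"
  shows "picard_continuous E P d F"
  unfolding picard_continuous_def
proof (intro ballI impI)
  fix g h assume g: "g \<in> E" and h: "h \<in> P"
  assume lim: "(\<lambda>n. d ((F ^^ n) g) h) \<longlonglongrightarrow> 0"
  have nn: "\<And>e f. e \<in> E \<Longrightarrow> f \<in> P \<Longrightarrow> d e f \<ge> 0"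
    using assms(1) unfolding bipolar_metric_space_def by auto
  have gE: "(F ^^ n) g \<in> E" for n
    by (induction n) (use g assms(2) in auto)
  have Fh: "F h \<in> P" using h assms(3) by auto
  have lim2: "(\<lambda>n. d (F ((F ^^ n) g)) h) \<longlonglongrightarrow> 0"
    using LIMSEQ_Suc[OF lim] by simp
  define R where "R n = pi * (\<Sum>u=1..\<sigma>. q u * (d ((F ^^ n) g) h ^ u + H u * d (F ((F ^^ n) g)) h ^ u))" for n
  have "R \<longlonglongrightarrow> pi * (\<Sum>u=1..\<sigma>. q u * (0 ^ u + H u * 0 ^ u))"
    unfolding R_def
    by (intro tendsto_intros lim lim2)
  moreover have "(\<Sum>u=1..\<sigma>. q u * ((0::real) ^ u + H u * 0 ^ u)) = 0"
    by (intro sum.neutral) (auto simp: power_0_left)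
  ultimately have R0: "R \<longlonglongrightarrow> 0" by simp
  have q1: "q 1 > 0" using assms(6,7) by auto
  have bound: "d (F ((F ^^ n) g)) (F h) \<le> R n / q 1" for n
  proof -
    let ?b = "d (F ((F ^^ n) g)) (F h)"
    have b0: "?b \<ge> 0" using nn gE assms(2) Fh by blast
    have "q 1 * ?b ^ 1 \<le> (\<Sum>u=1..\<sigma>. q u * ?b ^ u)"
    proof (rule member_le_sum)
      show "1 \<in> {1..\<sigma>}" using assms(6) by auto
      show "finite {1..\<sigma>}" by simp
      fix u assume "u \<in> {1..\<sigma>} - {1}"
      then have "q u > 0" using assms(7) by auto
      then show "0 \<le> q u * ?b ^ u" using b0 by simp
    qed
    also have "\<dots> \<le> R n" unfolding R_def using assms(9)[OF gE h] by simp
    finally show ?thesis using q1 by (simp add: field_simps)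
  qed
  have "(\<lambda>n. R n / q 1) \<longlonglongrightarrow> 0 / q 1" by (intro tendsto_intros R0) (use q1 in auto)
  then have L1: "(\<lambda>n. R n / q 1) \<longlonglongrightarrow> 0" by simp
  have L0: "(\<lambda>n. 0::real) \<longlonglongrightarrow> 0" by simp
  have E1: "\<forall>\<^sub>F n in sequentially. 0 \<le> d (F ((F ^^ n) g)) (F h)"
  proof (intro always_eventually allI)
    fix n
    have "F ((F ^^ n) g) \<in> E" using gE[of n] assms(2) by blast
    then show "0 \<le> d (F ((F ^^ n) g)) (F h)" using nn Fh by blast
  qed
  have E2: "\<forall>\<^sub>F n in sequentially. d (F ((F ^^ n) g)) (F h) \<le> R n / q 1"
    using bound by (intro always_eventually allI) simp
  show "(\<lambda>n. d (F ((F ^^ n) g)) (F h)) \<longlonglongrightarrow> 0"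
    by (rule real_tendsto_sandwich[OF E1 E2 L0 L1])
qed

end
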